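(* Let $G=(V,E)$ be a finite, simple, connected reflective graph, let $x\sim y$ be adjacent vertices and $z\in V$. Then there exist $x',y'\in B_1(z)$ with $x'\sim y'$ and $(x,y)\parallel(x',y')$.
   Context: $d$ is the combinatorial distance and $B_1(z)=\{v: d(v,z)\leq 1\}$. For adjacent $x\sim y$ let $V_x^y=\{v: d(v,x)<d(v,y)\}$, $V^{xy}=\{v:d(v,x)=d(v,y)\}$. A reflection from $x$ to $y$ is a graph automorphism $\phi$ with $\phi\circ\phi=\mathrm{id}$, $\phi(x)=y$, such that the edges between $V_x^y$ and $V_y^x$ are exactly $\{\{x',\phi(x')\}:x'\in V_x^y\}$ and $\phi$ fixes $V^{xy}$ pointwise. $G$ is reflective if every edge admits a reflection. For edges $x\sim y$, $x'\sim y'$ we write $(x,y)\parallel(x',y')$ if $x'\in V_x^y$ and $y'\in V_y^x$. *)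

theory Defs
  imports Main
begin

definition simple_graph :: "'a set \<Rightarrow> ('a \<Rightarrow> 'a \<Rightarrow> bool) \<Rightarrow> bool" where
  "simple_graph V E \<longleftrightarrow> (\<forall>u v. E u v \<longrightarrow> u \<in> V \<and> v \<in> V)
      \<and> (\<forall>u v. E u v \<longrightarrow> E v u) \<and> (\<forall>u. \<not> E u u)"

text \<open>Walks as vertex lists; a walk of length n has n+1 vertices.\<close>
fun is_walk :: "('a \<Rightarrow> 'a \<Rightarrow> bool) \<Rightarrow> 'a list \<Rightarrow> bool" where
  "is_walk E [] = False"
| "is_walk E [v] = True"
| "is_walk E (u # v # vs) = (E u v \<and> is_walk E (v # vs))"

definition walk_between :: "'a set \<Rightarrow> ('a \<Rightarrow> 'a \<Rightarrow> bool) \<Rightarrow> 'a \<Rightarrow> 'a \<Rightarrow> nat \<Rightarrow> bool" where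
  "walk_between V E u v n \<longleftrightarrow> (\<exists>ws. is_walk E ws \<and> set ws \<subseteq> V \<and> hd ws = u \<and> last ws = v
      \<and> length ws = Suc n)"

definition connected_graph :: "'a set \<Rightarrow> ('a \<Rightarrow> 'a \<Rightarrow> bool) \<Rightarrow> bool" where
  "connected_graph V E \<longleftrightarrow> (\<forall>u\<in>V. \<forall>v\<in>V. \<exists>n. walk_between V E u v n)"

text \<open>Combinatorial distance (meaningful for connected graphs).\<close>
definition gdist :: "'a set \<Rightarrow> ('a \<Rightarrow> 'a \<Rightarrow> bool) \<Rightarrow> 'a \<Rightarrow> 'a \<Rightarrow> nat" where
  "gdist V E u v = (LEAST n. walk_between V E u v n)"

definition ball1 :: "'a set \<Rightarrow> ('a \<Rightarrow> 'a \<Rightarrow> bool) \<Rightarrow> 'a \<Rightarrow> 'a set" where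
  "ball1 V E z = {v \<in> V. gdist V E v z \<le> 1}"

definition halfspace :: "'a set \<Rightarrow> ('a \<Rightarrow> 'a \<Rightarrow> bool) \<Rightarrow> 'a \<Rightarrow> 'a \<Rightarrow> 'a set" where
  "halfspace V E x y = {v \<in> V. gdist V E v x < gdist V E v y}"

definition equidist :: "'a set \<Rightarrow> ('a \<Rightarrow> 'a \<Rightarrow> bool) \<Rightarrow> 'a \<Rightarrow> 'a \<Rightarrow> 'a set" where
  "equidist V E x y = {v \<in> V. gdist V E v x = gdist V E v y}"

definition graph_automorphism :: "'a set \<Rightarrow> ('a \<Rightarrow> 'a \<Rightarrow> bool) \<Rightarrow> ('a \<Rightarrow> 'a) \<Rightarrow> bool" where
  "graph_automorphism V E \<phi> \<longleftrightarrow> bij_betw \<phi> V V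
      \<and> (\<forall>u\<in>V. \<forall>v\<in>V. E u v \<longleftrightarrow> E (\<phi> u) (\<phi> v))"

definition reflection :: "'a set \<Rightarrow> ('a \<Rightarrow> 'a \<Rightarrow> bool) \<Rightarrow> 'a \<Rightarrow> 'a \<Rightarrow> ('a \<Rightarrow> 'a) \<Rightarrow> bool" where
  "reflection V E x y \<phi> \<longleftrightarrow> graph_automorphism V E \<phi>
      \<and> (\<forall>v\<in>V. \<phi> (\<phi> v) = v)
      \<and> \<phi> x = y
      \<and> {{a, b} | a b. a \<in> halfspace V E x y \<and> b \<in> halfspace V E y x \<and> E a b}
          = {{a, \<phi> a} | a. a \<in> halfspace V E x y}
      \<and> (\<forall>v\<in>equidist V E x y. \<phi> v = v)"

definition reflective :: "'a set \<Rightarrow> ('a \<Rightarrow> 'a \<Rightarrow> bool) \<Rightarrow> bool" where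
  "reflective V E \<longleftrightarrow> (\<forall>x y. E x y \<longrightarrow> (\<exists>\<phi>. reflection V E x y \<phi>))"

definition edge_parallel :: "'a set \<Rightarrow> ('a \<Rightarrow> 'a \<Rightarrow> bool) \<Rightarrow> 'a \<Rightarrow> 'a \<Rightarrow> 'a \<Rightarrow> 'a \<Rightarrow> bool" where
  "edge_parallel V E x y x' y' \<longleftrightarrow> x' \<in> halfspace V E x y \<and> y' \<in> halfspace V E y x"

end

theory Submission
  imports Defs
begin

lemma is_walk_append:
  "is_walk E xs \<Longrightarrow> is_walk E ys \<Longrightarrow> last xs = hd ys \<Longrightarrow> is_walk E (xs @ tl ys)"
proof (induction E xs rule: is_walk.induct)
  case (1 E) then show ?case by simp
next
  case (2 E v) then show ?case by (cases ys) auto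
next
  case (3 E u v vs) then show ?case by auto
qed

lemma is_walk_rev:
  "is_walk E ws \<Longrightarrow> (\<forall>u v. E u v \<longrightarrow> E v u) \<Longrightarrow> is_walk E (rev ws)"
proof (induction E ws rule: is_walk.induct)
  case (1 E) then show ?case by simp
next
  case (2 E v) then show ?case by simp
next
  case (3 E' u v vs)
  have "is_walk E' (rev (v # vs) @ tl [v, u])"
    using 3 by (intro is_walk_append) auto
  then show ?case using 3 by simp
qed

lemma is_walk_map:
  "is_walk E ws \<Longrightarrow> set ws \<subseteq> V \<Longrightarrow> (\<forall>u\<in>V. \<forall>v\<in>V. E u v \<longrightarrow> E (f u) (f v))
   \<Longrightarrow> is_walk E (map f ws)"
  by (induction E ws rule: is_walk.induct) auto

locale G =
  fixes V :: "'a set" and E :: "'a \<Rightarrow> 'a \<Rightarrow> bool"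
  assumes sg: "simple_graph V E" and cn: "connected_graph V E"
begin

abbreviation "d \<equiv> gdist V E"

lemma EV: "E u v \<Longrightarrow> u \<in> V \<and> v \<in> V" using sg unfolding simple_graph_def by blast
lemma Esym: "E u v \<Longrightarrow> E v u" using sg unfolding simple_graph_def by blast
lemma Eirr: "\<not> E u u" using sg unfolding simple_graph_def by blast

lemma walk_ex: "u \<in> V \<Longrightarrow> v \<in> V \<Longrightarrow> walk_between V E u v (d u v)"
  unfolding gdist_def using cn unfolding connected_graph_def by (meson LeastI_ex)

lemma d_le: "walk_between V E u v n \<Longrightarrow> d u v \<le> n"
  unfolding gdist_def by (rule Least_le)

lemma d_refl: "u \<in> V \<Longrightarrow> d u u = 0"
proof -
  assume "u \<in> V"
  then have "walk_between V E u u 0" unfolding walk_between_def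
    by (intro exI[of _ "[u]"]) auto
  then show ?thesis using d_le by fastforce
qed

lemma d_edge: "E u v \<Longrightarrow> d u v \<le> 1"
proof -
  assume e: "E u v"
  then have "walk_between V E u v 1" unfolding walk_between_def using EV[OF e]
    by (intro exI[of _ "[u,v]"]) auto
  then show ?thesis using d_le by fastforce
qed

lemma d_zero: "u \<in> V \<Longrightarrow> v \<in> V \<Longrightarrow> d u v = 0 \<Longrightarrow> u = v"
proof -
  assume "u \<in> V" "v \<in> V" "d u v = 0"
  then have "walk_between V E u v 0" using walk_ex by metis
  then obtain ws where "length ws = 1" "hd ws = u" "last ws = v"
    unfolding walk_between_def by auto
  then show "u = v" by (cases ws) auto
qed

lemma d_tri: "u \<in> V \<Longrightarrow> v \<in> V \<Longrightarrow> w \<in> V \<Longrightarrow> d u w \<le> d u v + d v w"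
proof -
  assume V: "u \<in> V" "v \<in> V" "w \<in> V"
  obtain xs where xs: "is_walk E xs" "set xs \<subseteq> V" "hd xs = u" "last xs = v" "length xs = Suc (d u v)"
    using walk_ex[OF V(1,2)] unfolding walk_between_def by blast
  obtain ys where ys: "is_walk E ys" "set ys \<subseteq> V" "hd ys = v" "last ys = w" "length ys = Suc (d v w)"
    using walk_ex[OF V(2,3)] unfolding walk_between_def by blast
  have "walk_between V E u w (d u v + d v w)"
    unfolding walk_between_def
  proof (intro exI[of _ "xs @ tl ys"] conjI)
    show "is_walk E (xs @ tl ys)" using xs ys by (intro is_walk_append) auto
    have "set (tl ys) \<subseteq> set ys" by (cases ys) auto
    then show "set (xs @ tl ys) \<subseteq> V" using xs ys by auto
    show "hd (xs @ tl ys) = u" using xs by (cases xs) auto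
    show "last (xs @ tl ys) = w" using xs ys by (cases ys) auto
    show "length (xs @ tl ys) = Suc (d u v + d v w)" using xs ys by simp
  qed
  then show ?thesis by (rule d_le)
qed

lemma d_sym: "u \<in> V \<Longrightarrow> v \<in> V \<Longrightarrow> d u v = d v u"
proof -
  have *: "d v u \<le> d u v" if V: "u \<in> V" "v \<in> V" for u v
  proof -
    obtain xs where xs: "is_walk E xs" "set xs \<subseteq> V" "hd xs = u" "last xs = v" "length xs = Suc (d u v)"
      using walk_ex[OF V(1,2)] unfolding walk_between_def by blast
    have "xs \<noteq> []" using xs by auto
    have "walk_between V E v u (d u v)"
      unfolding walk_between_def
      using xs \<open>xs \<noteq> []\<close> is_walk_rev[of E xs] Esym
      by (intro exI[of _ "rev xs"]) (auto simp: hd_rev last_rev)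
    then show ?thesis by (rule d_le)
  qed
  assume "u \<in> V" "v \<in> V" then show ?thesis using * by (meson le_antisym)
qed

lemma d_step: "u \<in> V \<Longrightarrow> v \<in> V \<Longrightarrow> d u v = Suc m \<Longrightarrow> \<exists>w. E u w \<and> d w v = m"
proof -
  assume V: "u \<in> V" "v \<in> V" and dm: "d u v = Suc m"
  obtain ws where ws: "is_walk E ws" "set ws \<subseteq> V" "hd ws = u" "last ws = v" "length ws = Suc (Suc m)"
    using walk_ex[OF V] dm unfolding walk_between_def by auto
  then obtain w rest where wr: "ws = u # w # rest"
    by (cases ws; cases "tl ws") auto
  have e: "E u w" using ws wr by auto
  have "walk_between V E w v m" unfolding walk_between_def
    using ws wr by (intro exI[of _ "w # rest"]) auto
  then have "d w v \<le> m" by (rule d_le)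
  moreover have "d u v \<le> d u w + d w v" using d_tri V EV[OF e] by blast
  moreover have "d u w \<le> 1" using d_edge e .
  ultimately show ?thesis using e dm by (intro exI[of _ w]) auto
qed

lemma aut_d:
  assumes a: "graph_automorphism V E f" and inv: "\<forall>v\<in>V. f (f v) = v"
    and V: "u \<in> V" "v \<in> V"
  shows "d (f u) (f v) = d u v"
proof -
  have fV: "\<And>v. v \<in> V \<Longrightarrow> f v \<in> V" using a unfolding graph_automorphism_def bij_betw_def by auto
  have fE: "\<forall>u\<in>V. \<forall>v\<in>V. E u v \<longrightarrow> E (f u) (f v)" using a unfolding graph_automorphism_def by blast
  have le: "d (f u) (f v) \<le> d u v" if V: "u \<in> V" "v \<in> V" for u v
  proof -
    obtain xs where xs: "is_walk E xs" "set xs \<subseteq> V" "hd xs = u" "last xs = v" "length xs = Suc (d u v)"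
      using walk_ex[OF V(1,2)] unfolding walk_between_def by blast
    have "xs \<noteq> []" using xs by auto
    have "walk_between V E (f u) (f v) (d u v)"
      unfolding walk_between_def
      using xs \<open>xs \<noteq> []\<close> is_walk_map[of E xs V f] fE fV
      by (intro exI[of _ "map f xs"]) (auto simp: hd_map last_map)
    then show ?thesis by (rule d_le)
  qed
  have "d (f (f u)) (f (f v)) \<le> d (f u) (f v)" using le fV V by blast
  then show ?thesis using le[OF V] inv V by simp
qed

lemma refl_props:
  assumes r: "reflection V E a b f"
  shows "\<And>v. v \<in> V \<Longrightarrow> f v \<in> V"
    and "\<And>u v. u \<in> V \<Longrightarrow> v \<in> V \<Longrightarrow> d (f u) (f v) = d u v"
    and "\<And>u v. u \<in> V \<Longrightarrow> v \<in> V \<Longrightarrow> E u v \<Longrightarrow> E (f u) (f v)"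
    and "\<And>v. v \<in> V \<Longrightarrow> f (f v) = v"
    and "f a = b"
    and "\<And>v. v \<in> halfspace V E a b \<Longrightarrow> E v (f v)"
    and "\<And>v. v \<in> equidist V E a b \<Longrightarrow> f v = v"
proof -
  have a: "graph_automorphism V E f" and inv: "\<forall>v\<in>V. f (f v) = v" using r unfolding reflection_def by auto
  show "\<And>v. v \<in> V \<Longrightarrow> f v \<in> V" using a unfolding graph_automorphism_def bij_betw_def by auto
  show "\<And>u v. u \<in> V \<Longrightarrow> v \<in> V \<Longrightarrow> d (f u) (f v) = d u v" using aut_d[OF a inv] by blast
  show "\<And>u v. u \<in> V \<Longrightarrow> v \<in> V \<Longrightarrow> E u v \<Longrightarrow> E (f u) (f v)" using a unfolding graph_automorphism_def by blast
  show "\<And>v. v \<in> V \<Longrightarrow> f (f v) = v" using inv by blast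
  show "f a = b" using r unfolding reflection_def by auto
  show "\<And>v. v \<in> equidist V E a b \<Longrightarrow> f v = v" using r unfolding reflection_def by auto
  fix v assume h: "v \<in> halfspace V E a b"
  have "{v, f v} \<in> {{c, f c} | c. c \<in> halfspace V E a b}" using h by blast
  then have "{v, f v} \<in> {{p, q} | p q. p \<in> halfspace V E a b \<and> q \<in> halfspace V E b a \<and> E p q}"
    using r unfolding reflection_def by simp
  then obtain p q where "{v, f v} = {p, q}" "E p q" by blast
  then have "(v = p \<and> f v = q) \<or> (v = q \<and> f v = p)" by (simp add: doubleton_eq_iff)
  then show "E v (f v)" using Esym \<open>E p q\<close> by blast
qed

end

lemma (in G) claim:
  assumes r: "reflective V E" and xy: "E x y"
  shows "\<forall>w\<in>V. d w x = Suc m \<longrightarrow> d w y = Suc m \<longrightarrow> (\<exists>a. E w a \<and> d a x = m \<and> d a y = Suc m)"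
proof (induction m)
  have xV: "x \<in> V" and yV: "y \<in> V" using EV[OF xy] by auto
  have "x \<noteq> y" using Eirr xy by auto
  then have "d x y \<noteq> 0" using d_zero[OF xV yV] by auto
  then have dxy: "d x y = 1" using d_edge[OF xy] by linarith
  case 0
  show ?case
  proof (intro ballI impI)
    fix w assume wV: "w \<in> V" and h: "d w x = Suc 0" "d w y = Suc 0"
    obtain u where "E w u" "d u x = 0" using d_step[OF wV xV h(1)] by blast
    then have "u = x" using d_zero[OF _ xV] EV[OF \<open>E w u\<close>] by blast
    then show "\<exists>a. E w a \<and> d a x = 0 \<and> d a y = Suc 0" using \<open>E w u\<close> dxy d_refl[OF xV] by auto
  qed
next
  have xV: "x \<in> V" and yV: "y \<in> V" using EV[OF xy] by auto
  have "x \<noteq> y" using Eirr xy by auto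
  then have "d x y \<noteq> 0" using d_zero[OF xV yV] by auto
  then have dxy: "d x y = 1" using d_edge[OF xy] by linarith
  case (Suc m)
  show ?case
  proof (intro ballI impI)
    fix w assume wV: "w \<in> V" and h: "d w x = Suc (Suc m)" "d w y = Suc (Suc m)"
    obtain u where wu: "E w u" and ux: "d u x = Suc m" using d_step[OF wV xV h(1)] by blast
    have uV: "u \<in> V" using EV[OF wu] by blast
    have "d w y \<le> d w u + d u y" using d_tri wV uV yV by blast
    moreover have "d w u \<le> 1" using d_edge[OF wu] .
    moreover have "d u y \<le> d u x + d x y" using d_tri uV xV yV by blast
    ultimately consider "d u y = Suc (Suc m)" | "d u y = Suc m" using h ux dxy by linarith
    then show "\<exists>a. E w a \<and> d a x = Suc m \<and> d a y = Suc (Suc m)"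
    proof cases
      case 1 then show ?thesis using wu ux by blast
    next
      case 2
      then obtain a where ua: "E u a" and ax: "d a x = m" and ay: "d a y = Suc m"
        using Suc.IH uV ux by blast
      have aV: "a \<in> V" using EV[OF ua] by blast
      obtain f where f: "reflection V E u a f" using r ua unfolding reflective_def by blast
      note R = refl_props[OF f]
      have "d w x \<le> d w a + d a x" using d_tri wV aV xV by blast
      have "w \<noteq> u" using Eirr wu by auto
      then have "d w u \<noteq> 0" using d_zero[OF wV uV] by auto
      then have wu1: "d w u = 1" using d_edge[OF wu] by linarith
      have "d w a \<ge> 2" using \<open>d w x \<le> d w a + d a x\<close> h ax by linarith
      then have "w \<in> halfspace V E u a" unfolding halfspace_def using wV wu1 by simp
      then have wb: "E w (f w)" using R(6) by blast
      have "y \<in> equidist V E u a" unfolding equidist_def using yV d_sym[OF yV uV] d_sym[OF yV aV] 2 ay by simp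
      then have fy: "f y = y" using R(7) by blast
      have bV: "f w \<in> V" using R(1) wV by blast
      have fu: "f u = a" using R(5) .
      have "d (f w) a = 1" using R(2)[OF wV uV] fu wu1 by simp
      moreover have "d (f w) x \<le> d (f w) a + d a x" using d_tri bV aV xV by blast
      moreover have "d w x \<le> d w (f w) + d (f w) x" using d_tri wV bV xV by blast
      moreover have "d w (f w) \<le> 1" using d_edge[OF wb] .
      ultimately have "d (f w) x = Suc m" using h ax by linarith
      moreover have "d (f w) y = Suc (Suc m)" using R(2)[OF wV yV] fy h by simp
      ultimately show ?thesis using wb by blast
    qed
  qed
qed

theorem lemma2p4:
  fixes V :: "'a set" and E :: "'a \<Rightarrow> 'a \<Rightarrow> bool" and x y z :: 'a
  assumes "finite V" and "simple_graph V E" and "connected_graph V E"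
    and "reflective V E"
    and "E x y" and "z \<in> V"
  shows "\<exists>x' y'. x' \<in> ball1 V E z \<and> y' \<in> ball1 V E z \<and> E x' y'
           \<and> edge_parallel V E x y x' y'"
proof -
  interpret G V E using assms by unfold_locales
  note xy = \<open>E x y\<close> and zV = \<open>z \<in> V\<close>
  have xV: "x \<in> V" and yV: "y \<in> V" using EV[OF xy] by auto
  obtain f where f: "reflection V E x y f" using assms(4) xy unfolding reflective_def by blast
  note R = refl_props[OF f]
  have fx: "f x = y" using R(5) .
  have fy: "f y = x" using R(4)[OF xV] fx by simp
  have swap: "f v \<in> halfspace V E y x" if "v \<in> halfspace V E x y" for v
    using that R(1) R(2)[of v x] R(2)[of v y] xV yV fx fy unfolding halfspace_def by auto
  have swap2: "f v \<in> halfspace V E x y" if "v \<in> halfspace V E y x" for v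
    using that R(1) R(2)[of v x] R(2)[of v y] xV yV fx fy unfolding halfspace_def by auto
  have good: "\<exists>x' y'. x' \<in> ball1 V E z \<and> y' \<in> ball1 V E z \<and> E x' y' \<and> edge_parallel V E x y x' y'"
    if a: "a \<in> halfspace V E x y" and az: "d a z \<le> 1" and fz: "f z = z" for a
  proof -
    have aV: "a \<in> V" using a unfolding halfspace_def by blast
    have "d (f a) z = d a z" using R(2)[OF aV zV] fz by simp
    then show ?thesis using a az R(1)[OF aV] R(6)[OF a] swap[OF a]
      unfolding ball1_def edge_parallel_def by (intro exI[of _ a] exI[of _ "f a"]) (auto simp: aV)
  qed
  consider "z \<in> halfspace V E x y" | "z \<in> halfspace V E y x" | "z \<in> equidist V E x y"
    using zV unfolding halfspace_def equidist_def by force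
  then show ?thesis
  proof cases
    case 1
    have "d (f z) z \<le> 1" using d_edge[OF Esym[OF R(6)[OF 1]]] .
    then show ?thesis using 1 R(6)[OF 1] swap[OF 1] d_refl[OF zV] zV R(1)[OF zV]
      unfolding ball1_def edge_parallel_def by (intro exI[of _ z] exI[of _ "f z"]) auto
  next
    case 2
    have h: "f z \<in> halfspace V E x y" using swap2[OF 2] .
    have e: "E (f z) z" using R(6)[OF h] R(4)[OF zV] by simp
    have "d (f z) z \<le> 1" using d_edge[OF e] .
    then show ?thesis using 2 e h d_refl[OF zV] zV R(1)[OF zV]
      unfolding ball1_def edge_parallel_def by (intro exI[of _ "f z"] exI[of _ z]) auto
  next
    case 3
    have fz: "f z = z" using R(7)[OF 3] .
    have eq: "d z x = d z y" using 3 unfolding equidist_def by blast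
    have "d z x \<noteq> 0" using d_zero[OF zV xV] eq d_refl[OF yV] d_zero[OF zV yV] Eirr xy by metis
    then obtain m where m: "d z x = Suc m" using not0_implies_Suc by blast
    obtain a where za: "E z a" and ax: "d a x = m" and ay: "d a y = Suc m"
      using claim[OF assms(4) xy] zV m eq by metis
    have aV: "a \<in> V" using EV[OF za] by blast
    have "a \<in> halfspace V E x y" unfolding halfspace_def using aV ax ay by simp
    moreover have "d a z \<le> 1" using d_edge[OF Esym[OF za]] .
    ultimately show ?thesis using good fz by blast
  qed
qed

end
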